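(* Let $B$ be a crystal, $b\in B$ and $b_\mu\in B_S$ such that $\mathrm{wt}(b)+\mathrm{wt}(b_\mu)\in P_+$. Then for every sequence $i_1,\dots,i_r\in\{1,\dots,n\}$, $\tilde e_{i_r}\cdots\tilde e_{i_1}b_\mu\ne0$ implies $\tilde f_{i_r}\cdots\tilde f_{i_1}b\neq0$.
   Context: Let $\mathfrak g$ be of type $D_n$, weights $(\lambda_1,\dots,\lambda_n)$ in an orthonormal basis $\epsilon_j$, simple roots $\alpha_j=\epsilon_j-\epsilon_{j+1}$ ($j<n$), $\alpha_n=\epsilon_{n-1}+\epsilon_n$, $P_+$ the dominant integral weights ($\lambda_j\in\frac12\mathbb Z$, $\lambda_j-\lambda_k\in\mathbb Z$, $\lambda_1\ge\dots\ge\lambda_n$, $\lambda_{n-1}+\lambda_n\ge0$). A crystal means a normal crystal whose connected components are Kashiwara crystals $B_\lambda$ of irreducible $U_q(\mathfrak g)$-modules; in particular $\varepsilon_i(b)=\max\{k:\tilde e_i^kb\ne0\}$, $\varphi_i(b)=\max\{k:\tilde f_i^kb\ne0\}$ and $\varphi_i(b)-\varepsilon_i(b)=\langle\mathrm{wt}(b),\alpha_i^\vee\rangle$. The spinor crystal $B_S$: sign vectors $(i_1,\dots,i_n)$ of weight $\frac12\sum i_j\epsilon_j$; for $j<n$, $\tilde f_j$ turns $(i_j,i_{j+1})=(+,-)$ into $(-,+)$ (else $0$), $\tilde e_j$ the reverse; $\tilde f_n$ turns $(i_{n-1},i_n)=(+,+)$ into $(-,-)$ (else $0$), $\tilde e_n$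 the reverse. *)

theory Defs
  imports Main "HOL.Rat"
begin

text \<open>Weights are functions nat => rat; only the coordinates 1..n are meaningful
  (coordinate j is the coefficient of epsilon_j).  The operators e_i, f_i return
  None for the symbol 0.\<close>

record 'b crystal =
  cr_carrier :: "'b set"
  cr_wt :: "'b \<Rightarrow> nat \<Rightarrow> rat"
  cr_e :: "nat \<Rightarrow> 'b \<Rightarrow> 'b option"
  cr_f :: "nat \<Rightarrow> 'b \<Rightarrow> 'b option"

text \<open>A sign vector (i_1,...,i_n) is a bool list of length n, True = +, with i_j = s!(j-1).\<close>

definition spin_f :: "nat \<Rightarrow> nat \<Rightarrow> bool list \<Rightarrow> bool list option" where
  "spin_f n i s =
     (if 1 \<le> i \<and> i < n then
        (if s!(i-1) \<and> \<not> s!i then Some (s[i-1 := False, i := True]) else None)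
      else if i = n then
        (if s!(n-2) \<and> s!(n-1) then Some (s[n-2 := False, n-1 := False]) else None)
      else None)"

definition spin_e :: "nat \<Rightarrow> nat \<Rightarrow> bool list \<Rightarrow> bool list option" where
  "spin_e n i s =
     (if 1 \<le> i \<and> i < n then
        (if \<not> s!(i-1) \<and> s!i then Some (s[i-1 := True, i := False]) else None)
      else if i = n then
        (if \<not> s!(n-2) \<and> \<not> s!(n-1) then Some (s[n-2 := True, n-1 := True]) else None)
      else None)"

definition spin_wt :: "nat \<Rightarrow> bool list \<Rightarrow> nat \<Rightarrow> rat" where
  "spin_wt n s j = (if 1 \<le> j \<and> j \<le> n then (if s!(j-1) then 1/2 else -1/2) else 0)"

definition spinor_crystal :: "nat \<Rightarrow> bool list crystal" where
  "spinor_crystal n = \<lparr> cr_carrier = {s. length s = n}, cr_wt = spin_wt n,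
                        cr_e = spin_e n, cr_f = spin_f n \<rparr>"

text \<open>Each spinor factor has epsilon_i + phi_i <= 1, so it contributes the signature
  -1 (epsilon_i = 1), +1 (phi_i = 1) or 0.  Cancelling (+,-) pairs, f_i acts on the
  leftmost uncancelled +, e_i on the rightmost uncancelled -.\<close>

definition spin_sig :: "nat \<Rightarrow> nat \<Rightarrow> bool list \<Rightarrow> int" where
  "spin_sig n i s = (if spin_e n i s \<noteq> None then -1 else if spin_f n i s \<noteq> None then 1 else 0)"

definition tens_f :: "nat \<Rightarrow> nat \<Rightarrow> bool list list \<Rightarrow> bool list list option" where
  "tens_f n i w =
     (let \<sigma> = (\<lambda>j. spin_sig n i (w!j));
          J = {j. j < length w \<and> \<sigma> j = 1 \<and>
                   (\<forall>q. j \<le> q \<and> q < length w \<longrightarrow> (\<Sum>m=j..q. \<sigma> m) > 0)}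
      in if J = {} then None
         else Some (w[Min J := the (spin_f n i (w!(Min J)))]))"

definition tens_e :: "nat \<Rightarrow> nat \<Rightarrow> bool list list \<Rightarrow> bool list list option" where
  "tens_e n i w =
     (let \<sigma> = (\<lambda>j. spin_sig n i (w!j));
          J = {j. j < length w \<and> \<sigma> j = -1 \<and>
                   (\<forall>q. q \<le> j \<longrightarrow> (\<Sum>m=q..j. \<sigma> m) < 0)}
      in if J = {} then None
         else Some (w[Max J := the (spin_e n i (w!(Max J)))]))"

definition tens_wt :: "nat \<Rightarrow> bool list list \<Rightarrow> nat \<Rightarrow> rat" where
  "tens_wt n w j = (\<Sum>s\<leftarrow>w. spin_wt n s j)"

definition spinor_tensor_power :: "nat \<Rightarrow> nat \<Rightarrow> bool list list crystal" where
  "spinor_tensor_power n k =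
     \<lparr> cr_carrier = {w. length w = k \<and> (\<forall>s\<in>set w. length s = n)},
       cr_wt = tens_wt n, cr_e = tens_e n, cr_f = tens_f n \<rparr>"

definition cr_edges :: "nat \<Rightarrow> ('b, 'z) crystal_scheme \<Rightarrow> ('b \<times> 'b) set" where
  "cr_edges n C = {(a, b). a \<in> cr_carrier C \<and> b \<in> cr_carrier C \<and>
      (\<exists>i\<in>{1..n}. cr_e C i a = Some b \<or> cr_f C i a = Some b)}"

definition cr_component :: "nat \<Rightarrow> ('b, 'z) crystal_scheme \<Rightarrow> 'b \<Rightarrow> 'b set" where
  "cr_component n C x = {y. (x, y) \<in> (cr_edges n C \<union> (cr_edges n C)\<inverse>)\<^sup>*}"

definition component_iso ::
  "nat \<Rightarrow> ('b, 'z) crystal_scheme \<Rightarrow> 'b \<Rightarrow> ('c, 'y) crystal_scheme \<Rightarrow> 'c \<Rightarrow> bool" where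
  "component_iso n C x D y \<longleftrightarrow>
     (\<exists>\<phi>. \<phi> x = y \<and> bij_betw \<phi> (cr_component n C x) (cr_component n D y) \<and>
        (\<forall>a\<in>cr_component n C x.
           (\<forall>j\<in>{1..n}. cr_wt D (\<phi> a) j = cr_wt C a j) \<and>
           (\<forall>i\<in>{1..n}. cr_e D i (\<phi> a) = map_option \<phi> (cr_e C i a) \<and>
                       cr_f D i (\<phi> a) = map_option \<phi> (cr_f C i a))))"

text \<open>A crystal (normal crystal): every connected component is isomorphic to a
  connected component of a tensor power of B_S, i.e. to a Kashiwara crystal B_lambda
  (every B_lambda, lambda in P_+, occurs this way).\<close>
definition is_crystal :: "nat \<Rightarrow> ('b, 'z) crystal_scheme \<Rightarrow> bool" where
  "is_crystal n B \<longleftrightarrow>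
     (\<forall>b\<in>cr_carrier B. \<forall>i\<in>{1..n}. \<forall>b'.
        (cr_e B i b = Some b' \<or> cr_f B i b = Some b') \<longrightarrow> b' \<in> cr_carrier B) \<and>
     (\<forall>b\<in>cr_carrier B. \<exists>k y. y \<in> cr_carrier (spinor_tensor_power n k) \<and>
        component_iso n B b (spinor_tensor_power n k) y)"

definition dominant :: "nat \<Rightarrow> (nat \<Rightarrow> rat) \<Rightarrow> bool" where
  "dominant n lam \<longleftrightarrow>
     (\<forall>j\<in>{1..n}. 2 * lam j \<in> \<int>) \<and>
     (\<forall>j\<in>{1..n}. \<forall>k\<in>{1..n}. lam j - lam k \<in> \<int>) \<and>
     (\<forall>j. 1 \<le> j \<and> j < n \<longrightarrow> lam j \<ge> lam (Suc j)) \<and>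
     lam (n - 1) + lam n \<ge> 0"

text \<open>iter_ops g [i_1,...,i_r] b = g_{i_r} ... g_{i_1} b (None = 0).\<close>
definition iter_ops :: "(nat \<Rightarrow> 'b \<Rightarrow> 'b option) \<Rightarrow> nat list \<Rightarrow> 'b \<Rightarrow> 'b option" where
  "iter_ops g idx b = fold (\<lambda>i ob. Option.bind ob (g i)) idx (Some b)"

end

theory Submission
  imports Defs
begin

definition pr :: "nat \<Rightarrow> nat \<Rightarrow> (nat \<Rightarrow> rat) \<Rightarrow> rat" where
  "pr n i lam = (if i < n then lam i - lam (Suc i) else lam (n-1) + lam n)"

definition alpha :: "nat \<Rightarrow> nat \<Rightarrow> nat \<Rightarrow> rat" where
  "alpha n i j = (if i < n then (if j = i then 1 else if j = Suc i then -1 else 0)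
                  else (if j = n-1 \<or> j = n then 1 else 0))"

lemma pr_cong: "(\<And>j. j\<in>{1..n} \<Longrightarrow> lam j = lam' j) \<Longrightarrow> i\<in>{1..n} \<Longrightarrow> 2 \<le> n \<Longrightarrow> pr n i lam = pr n i lam'"
  unfolding pr_def by auto

lemma pr_add: "pr n i (\<lambda>j. a j + c j) = pr n i a + pr n i c"
  unfolding pr_def by auto

lemma spin_pr: "length s = n \<Longrightarrow> i\<in>{1..n} \<Longrightarrow> 2 \<le> n \<Longrightarrow> pr n i (spin_wt n s) = of_int (spin_sig n i s)"
  unfolding pr_def spin_wt_def spin_sig_def spin_e_def spin_f_def
  by (cases "s!(i-1)"; cases "s!i"; cases "s!(n-2)"; cases "s!(n-1)"; auto simp: numeral_2_eq_2)

lemma spin_sig_range: "spin_sig n i s \<le> 1" unfolding spin_sig_def by auto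

lemma spin_f_wt: "length s = n \<Longrightarrow> i\<in>{1..n} \<Longrightarrow> 4 \<le> n \<Longrightarrow> spin_f n i s = Some s' \<Longrightarrow> j\<in>{1..n} \<Longrightarrow>
   spin_wt n s' j = spin_wt n s j - alpha n i j"
proof -
  assume a: "length s = n" "i\<in>{1..n}" "4 \<le> n" "spin_f n i s = Some s'" "j\<in>{1..n}"
  have "n = Suc (Suc (n-2))" using a(3) by arith
  then obtain m where m: "n = Suc (Suc m)" by blast
  show ?thesis using a unfolding m spin_wt_def spin_f_def alpha_def
    by (auto simp: nth_list_update split: if_splits)
qed

lemma spin_e_wt: "length s = n \<Longrightarrow> i\<in>{1..n} \<Longrightarrow> 4 \<le> n \<Longrightarrow> spin_e n i s = Some s' \<Longrightarrow> j\<in>{1..n} \<Longrightarrow>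
   spin_wt n s' j = spin_wt n s j + alpha n i j"
proof -
  assume a: "length s = n" "i\<in>{1..n}" "4 \<le> n" "spin_e n i s = Some s'" "j\<in>{1..n}"
  have "n = Suc (Suc (n-2))" using a(3) by arith
  then obtain m where m: "n = Suc (Suc m)" by blast
  show ?thesis using a unfolding m spin_wt_def spin_e_def alpha_def
    by (auto simp: nth_list_update split: if_splits)
qed

lemma spin_e_pr: "length s = n \<Longrightarrow> i\<in>{1..n} \<Longrightarrow> 2 \<le> n \<Longrightarrow> spin_e n i s \<noteq> None \<Longrightarrow> pr n i (spin_wt n s) = -1"
  by (simp add: spin_pr spin_sig_def)

lemma spin_e_len: "spin_e n i s = Some s' \<Longrightarrow> length s' = length s"
  unfolding spin_e_def by (auto split: if_splits)

lemma tens_pr: "pr n i (tens_wt n w) = sum_list (map (\<lambda>s. pr n i (spin_wt n s)) w)"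
  by (induction w) (auto simp: pr_def tens_wt_def algebra_simps)

lemma sum_list_upd: "k < length xs \<Longrightarrow> sum_list (xs[k := x]) = sum_list xs + x - xs ! k"
  for xs :: "'a::ab_group_add list"
  by (induction xs arbitrary: k) (auto split: nat.split simp: algebra_simps)

lemma exists_J:
  fixes \<sigma> :: "nat \<Rightarrow> int"
  assumes pos: "(\<Sum>m<L. \<sigma> m) > 0" and le1: "\<And>m. \<sigma> m \<le> 1"
  shows "\<exists>j<L. \<sigma> j = 1 \<and> (\<forall>q. j \<le> q \<and> q < L \<longrightarrow> (\<Sum>m=j..q. \<sigma> m) > 0)"
proof -
  define S where "S p = (\<Sum>m<p. \<sigma> m)" for p
  define M where "M = Min (S ` {0..L})"
  have Mle: "M \<le> S p" if "p \<le> L" for p unfolding M_def using that by simp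
  have Min: "M \<in> S ` {0..L}" unfolding M_def by (rule Min_in) auto
  define A where "A = {p. p \<le> L \<and> S p = M}"
  have finA: "finite A" unfolding A_def by auto
  have neA: "A \<noteq> {}" using Min unfolding A_def by auto
  define j where "j = Max A"
  have jA: "j \<in> A" unfolding j_def using finA neA by (rule Max_in)
  have jmax: "p \<le> j" if "p \<in> A" for p unfolding j_def using finA that by simp
  have S0: "S 0 = 0" by (simp add: S_def)
  have SL: "S L > 0" using pos by (simp add: S_def)
  have "S L \<noteq> M" using Mle[of 0] S0 SL by linarith
  have jle: "j \<le> L" and Sj: "S j = M" using jA unfolding A_def by auto
  have jL: "j < L" using jle Sj \<open>S L \<noteq> M\<close> by (cases "j = L") auto
  have gt: "S p > S j" if "j < p" "p \<le> L" for p
  proof -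
    have "S p \<ge> M" using Mle that by simp
    moreover have "S p \<noteq> M" using jmax[of p] that unfolding A_def by auto
    ultimately show ?thesis using jA unfolding A_def by auto
  qed
  have split: "(\<Sum>m=j..q. \<sigma> m) = S (Suc q) - S j" if "j \<le> q" for q
  proof -
    have "sum \<sigma> {0..<j} + sum \<sigma> {j..<Suc q} = sum \<sigma> {0..<Suc q}"
      using that by (intro sum.atLeastLessThan_concat) auto
    moreover have "S (Suc q) = sum \<sigma> {0..<Suc q}" "S j = sum \<sigma> {0..<j}"
      by (simp_all only: S_def atLeast0LessThan)
    moreover have "sum \<sigma> {j..<Suc q} = sum \<sigma> {j..q}"
      by (simp only: atLeastLessThanSuc_atLeastAtMost)
    ultimately show ?thesis by linarith
  qed
  have all: "\<forall>q. j \<le> q \<and> q < L \<longrightarrow> (\<Sum>m=j..q. \<sigma> m) > 0"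
  proof (intro allI impI)
    fix q assume q: "j \<le> q \<and> q < L"
    have "S (Suc q) > S j" using gt[of "Suc q"] q by simp
    thus "(\<Sum>m=j..q. \<sigma> m) > 0" using split[of q] q by simp
  qed
  have "(\<Sum>m=j..j. \<sigma> m) > 0" using all jL by blast
  hence "\<sigma> j > 0" by simp
  hence "\<sigma> j = 1" using le1[of j] by simp
  thus ?thesis using jL all by blast
qed

lemma sig1: "spin_sig n i s = 1 \<Longrightarrow> \<exists>s'. spin_f n i s = Some s'"
  unfolding spin_sig_def by (auto split: if_splits)

lemma tens_f_step:
  assumes len: "\<forall>s\<in>set w. length s = n" and i: "i\<in>{1..n}" and n4: "4 \<le> n"
    and p: "pr n i (tens_wt n w) \<ge> 1"
  shows "\<exists>w'. tens_f n i w = Some w' \<and> (\<forall>j\<in>{1..n}. tens_wt n w' j = tens_wt n w j - alpha n i j)"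
proof -
  define \<sigma> where "\<sigma> = (\<lambda>j. spin_sig n i (w!j))"
  define J where "J = {j. j < length w \<and> \<sigma> j = 1 \<and>
                   (\<forall>q. j \<le> q \<and> q < length w \<longrightarrow> (\<Sum>m=j..q. \<sigma> m) > 0)}"
  have tf: "tens_f n i w = (if J = {} then None else Some (w[Min J := the (spin_f n i (w!(Min J)))]))"
    unfolding tens_f_def J_def \<sigma>_def Let_def by simp
  have "pr n i (tens_wt n w) = sum_list (map (\<lambda>s. of_int (spin_sig n i s)) w)"
    unfolding tens_pr using len i n4 by (intro arg_cong[where f=sum_list] map_cong) (auto simp: spin_pr)
  also have "\<dots> = of_int (\<Sum>m<length w. \<sigma> m)"
    unfolding sum_list_sum_nth \<sigma>_def by (simp add: atLeast0LessThan)
  finally have "(\<Sum>m<length w. \<sigma> m) > 0" using p by linarith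
  from exists_J[OF this] obtain j0 where "j0 < length w" "\<sigma> j0 = 1"
     "\<forall>q. j0 \<le> q \<and> q < length w \<longrightarrow> (\<Sum>m=j0..q. \<sigma> m) > 0"
    unfolding \<sigma>_def using spin_sig_range by blast
  hence "j0 \<in> J" unfolding J_def by blast
  hence "J \<noteq> {}" by blast
  moreover have "finite J" unfolding J_def by auto
  ultimately have kJ: "Min J \<in> J" by (rule Min_in[rotated])
  define k where "k = Min J"
  have k: "k < length w" "\<sigma> k = 1" using kJ unfolding k_def J_def by auto
  then obtain s' where s': "spin_f n i (w!k) = Some s'" using sig1 unfolding \<sigma>_def by blast
  have lk: "length (w!k) = n" using len k by auto
  have tfk: "tens_f n i w = Some (w[k := s'])" using tf \<open>J \<noteq> {}\<close> s' unfolding k_def by simp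
  have wtk: "tens_wt n (w[k := s']) j = tens_wt n w j - alpha n i j" if j: "j\<in>{1..n}" for j
  proof -
    have "tens_wt n (w[k := s']) j = sum_list ((map (\<lambda>s. spin_wt n s j) w)[k := spin_wt n s' j])"
      unfolding tens_wt_def by (simp add: map_update)
    also have "\<dots> = tens_wt n w j + spin_wt n s' j - spin_wt n (w!k) j"
      using k by (simp add: sum_list_upd tens_wt_def)
    also have "\<dots> = tens_wt n w j - alpha n i j"
      using spin_f_wt[OF lk i n4 s' j] by simp
    finally show ?thesis .
  qed
  show ?thesis
    apply (rule exI[of _ "w[k := s']"])
    using tfk wtk by simp
qed

lemma B_step:
  assumes cr: "is_crystal n B" and b: "b \<in> cr_carrier B" and i: "i\<in>{1..n}" and n4: "4 \<le> n"
    and p: "pr n i (cr_wt B b) \<ge> 1"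
  shows "\<exists>b'. cr_f B i b = Some b' \<and> b' \<in> cr_carrier B \<and>
           (\<forall>j\<in>{1..n}. cr_wt B b' j = cr_wt B b j - alpha n i j)"
proof -
  have cl: "\<forall>b\<in>cr_carrier B. \<forall>i\<in>{1..n}. \<forall>b'.
        (cr_e B i b = Some b' \<or> cr_f B i b = Some b') \<longrightarrow> b' \<in> cr_carrier B"
    using cr unfolding is_crystal_def by (rule conjunct1)
  have "\<forall>b\<in>cr_carrier B. \<exists>k y. y \<in> cr_carrier (spinor_tensor_power n k) \<and>
        component_iso n B b (spinor_tensor_power n k) y"
    using cr unfolding is_crystal_def by (rule conjunct2)
  from bspec[OF this b] obtain k y where y: "y \<in> cr_carrier (spinor_tensor_power n k)"
    and iso: "component_iso n B b (spinor_tensor_power n k) y" by blast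
  define D where "D = spinor_tensor_power n k"
  have Dw: "cr_wt D = tens_wt n" and Df: "cr_f D = tens_f n" unfolding D_def spinor_tensor_power_def by simp_all
  from iso obtain \<phi> where phib: "\<phi> b = y"
    and pres: "\<forall>a\<in>cr_component n B b.
           (\<forall>j\<in>{1..n}. cr_wt D (\<phi> a) j = cr_wt B a j) \<and>
           (\<forall>i\<in>{1..n}. cr_e D i (\<phi> a) = map_option \<phi> (cr_e B i a) \<and>
                       cr_f D i (\<phi> a) = map_option \<phi> (cr_f B i a))"
    unfolding component_iso_def D_def by (elim exE conjE) blast
  have bc: "b \<in> cr_component n B b" unfolding cr_component_def by simp
  note pb = bspec[OF pres bc]
  have wy: "tens_wt n y j = cr_wt B b j" if "j\<in>{1..n}" for j
    using bspec[OF conjunct1[OF pb] that] phib Dw by simp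
  have fy: "tens_f n i y = map_option \<phi> (cr_f B i b)"
    using conjunct2[OF bspec[OF conjunct2[OF pb] i]] phib Df by simp
  have len: "\<forall>s\<in>set y. length s = n" using y unfolding spinor_tensor_power_def by simp
  have "pr n i (tens_wt n y) = pr n i (cr_wt B b)"
    using n4 i by (intro pr_cong) (auto simp: wy)
  with p have "pr n i (tens_wt n y) \<ge> 1" by simp
  from tens_f_step[OF len i n4 this] obtain w' where w': "tens_f n i y = Some w'"
    and ww: "\<forall>j\<in>{1..n}. tens_wt n w' j = tens_wt n y j - alpha n i j" by blast
  from fy w' obtain b' where b': "cr_f B i b = Some b'" "\<phi> b' = w'" by (cases "cr_f B i b") auto
  have b'c: "b' \<in> cr_carrier B" using cl b i b' by blast
  have "(b, b') \<in> cr_edges n B" unfolding cr_edges_def using b b'c i b' by blast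
  hence b'comp: "b' \<in> cr_component n B b" unfolding cr_component_def by blast
  note pb' = bspec[OF pres b'comp]
  have wb': "cr_wt B b' j = cr_wt B b j - alpha n i j" if j: "j\<in>{1..n}" for j
  proof -
    have "cr_wt B b' j = tens_wt n w' j"
      using bspec[OF conjunct1[OF pb'] j] b'(2) Dw by simp
    thus ?thesis using ww wy j by auto
  qed
  show ?thesis
    apply (rule exI[of _ b'])
    using b' b'c wb' by simp
qed

lemma iter_None: "fold (\<lambda>i ob. Option.bind ob (g i)) idx None = None"
  by (induction idx) auto

lemma iter_Cons: "iter_ops g (i#rs) b = (case g i b of None \<Rightarrow> None | Some b' \<Rightarrow> iter_ops g rs b')"
  unfolding iter_ops_def by (cases "g i b") (auto simp: iter_None)

lemma main_ind:
  assumes cr: "is_crystal n B" and n4: "4 \<le> n"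
  shows "b \<in> cr_carrier B \<Longrightarrow> length mu = n \<Longrightarrow>
    (\<forall>i\<in>{1..n}. pr n i (\<lambda>j. cr_wt B b j + spin_wt n mu j) \<ge> 0) \<Longrightarrow>
    set idx \<subseteq> {1..n} \<Longrightarrow> iter_ops (spin_e n) idx mu \<noteq> None \<Longrightarrow>
    iter_ops (cr_f B) idx b \<noteq> None"
proof (induction idx arbitrary: b mu)
  case Nil
  then show ?case by (simp add: iter_ops_def)
next
  case (Cons i rs)
  have i: "i\<in>{1..n}" using Cons.prems by auto
  from Cons.prems(5) obtain mu' where mu': "spin_e n i mu = Some mu'"
    and rest: "iter_ops (spin_e n) rs mu' \<noteq> None"
    by (cases "spin_e n i mu") (auto simp: iter_Cons)
  have pm: "pr n i (spin_wt n mu) = -1" using spin_e_pr[OF Cons.prems(2) i] n4 mu' by simp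
  have "pr n i (\<lambda>j. cr_wt B b j + spin_wt n mu j) \<ge> 0" using Cons.prems(3) i by blast
  hence "pr n i (cr_wt B b) \<ge> 1" using pm by (simp add: pr_add)
  from B_step[OF cr Cons.prems(1) i n4 this] obtain b' where b': "cr_f B i b = Some b'"
    "b' \<in> cr_carrier B" "\<forall>j\<in>{1..n}. cr_wt B b' j = cr_wt B b j - alpha n i j" by blast
  have lmu': "length mu' = n" using spin_e_len[OF mu'] Cons.prems(2) by simp
  have eq: "cr_wt B b' j + spin_wt n mu' j = cr_wt B b j + spin_wt n mu j" if "j\<in>{1..n}" for j
    using b'(3) spin_e_wt[OF Cons.prems(2) i n4 mu' that] that by simp
  have "\<forall>k\<in>{1..n}. pr n k (\<lambda>j. cr_wt B b' j + spin_wt n mu' j) \<ge> 0"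
  proof
    fix k assume k: "k\<in>{1..n}"
    have "pr n k (\<lambda>j. cr_wt B b' j + spin_wt n mu' j) = pr n k (\<lambda>j. cr_wt B b j + spin_wt n mu j)"
      using k n4 by (intro pr_cong) (auto simp: eq)
    moreover have "pr n k (\<lambda>j. cr_wt B b j + spin_wt n mu j) \<ge> 0" using bspec[OF Cons.prems(3) k] .
    ultimately show "pr n k (\<lambda>j. cr_wt B b' j + spin_wt n mu' j) \<ge> 0" by linarith
  qed
  moreover have "set rs \<subseteq> {1..n}" using Cons.prems(4) by simp
  ultimately have "iter_ops (cr_f B) rs b' \<noteq> None" using Cons.IH b'(2) lmu' rest by blast
  thus ?case by (simp add: iter_Cons b')
qed


theorem corollary4p1:
  fixes n :: nat and B :: "'b crystal" and b :: 'b and bmu :: "bool list" and idx :: "nat list"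
  assumes "4 \<le> n"
    and "is_crystal n B"
    and "b \<in> cr_carrier B"
    and "bmu \<in> cr_carrier (spinor_crystal n)"
    and "dominant n (\<lambda>j. cr_wt B b j + cr_wt (spinor_crystal n) bmu j)"
    and "set idx \<subseteq> {1..n}"
    and "iter_ops (cr_e (spinor_crystal n)) idx bmu \<noteq> None"
  shows "iter_ops (cr_f B) idx b \<noteq> None"
proof -
  have len: "length bmu = n" using assms(4) by (simp add: spinor_crystal_def)
  have d: "dominant n (\<lambda>j. cr_wt B b j + spin_wt n bmu j)" using assms(5) by (simp add: spinor_crystal_def)
  have "\<forall>i\<in>{1..n}. pr n i (\<lambda>j. cr_wt B b j + spin_wt n bmu j) \<ge> 0"
  proof
    fix i assume i: "i\<in>{1..n}"
    have d1: "\<forall>j. 1 \<le> j \<and> j < n \<longrightarrow> cr_wt B b (Suc j) + spin_wt n bmu (Suc j) \<le> cr_wt B b j + spin_wt n bmu j"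
      and d2: "0 \<le> cr_wt B b (n - 1) + spin_wt n bmu (n - 1) + (cr_wt B b n + spin_wt n bmu n)"
      using d unfolding dominant_def by blast+
    show "pr n i (\<lambda>j. cr_wt B b j + spin_wt n bmu j) \<ge> 0"
    proof (cases "i < n")
      case True
      then show ?thesis using d1 i unfolding pr_def by auto
    next
      case False
      then show ?thesis using d2 unfolding pr_def by simp
    qed
  qed
  moreover have "iter_ops (spin_e n) idx bmu \<noteq> None" using assms(7) by (simp add: spinor_crystal_def)
  ultimately show ?thesis using main_ind[OF assms(2) assms(1) assms(3) len] assms(6) by blast
qed

end
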